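(* Let $i\in[n]$ be such that $m_i=1$, and let $N\subseteq M_i$. Then $M_i\setminus N$ is an abelian ideal if and only if there exists $w\in W^i$ such that $N=\overline N(w)$.
   Context: $\Phi$ is a finite irreducible crystallographic root system with basis $\Pi=\{\alpha_1,\dots,\alpha_n\}$, positive roots $\Phi^+$, highest root $\theta=\sum_i m_i\alpha_i$, Weyl group $W$ with length $\ell$. The root poset is $\Phi^+$ with $\beta\ge\gamma$ iff $\beta-\gamma$ is a nonnegative integer combination of simple roots; an abelian ideal is a subset of $\Phi^+$ closed upward in the root poset with $(I+I)\cap\Phi=\emptyset$. $M_i=\{\beta\in\Phi^+\mid\beta\ge\alpha_i\}$; $D_r(w)=\{\alpha\in\Pi\mid\ell(ws_\alpha)<\ell(w)\}$; $W^i=\{w\in W\mid D_r(w)\subseteq\{\alpha_i\}\}$; $\overline N(w)=\{\beta\in\Phi^+\mid w(\beta)\in-\Phi^+\}$. *)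

theory Defs
  imports "HOL-Analysis.Analysis"
begin

definition refl :: "'a::euclidean_space \<Rightarrow> 'a \<Rightarrow> 'a" where
  "refl \<alpha> x = x - (2 * (x \<bullet> \<alpha>) / (\<alpha> \<bullet> \<alpha>)) *\<^sub>R \<alpha>"

definition root_system :: "'a::euclidean_space set \<Rightarrow> bool" where
  "root_system \<Phi> \<longleftrightarrow>
     finite \<Phi> \<and> 0 \<notin> \<Phi> \<and> span \<Phi> = UNIV \<and>
     (\<forall>\<alpha>\<in>\<Phi>. refl \<alpha> ` \<Phi> = \<Phi>) \<and>
     (\<forall>\<alpha>\<in>\<Phi>. \<forall>\<beta>\<in>\<Phi>. 2 * (\<beta> \<bullet> \<alpha>) / (\<alpha> \<bullet> \<alpha>) \<in> \<int>) \<and>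
     (\<forall>\<alpha>\<in>\<Phi>. \<forall>c::real. c *\<^sub>R \<alpha> \<in> \<Phi> \<longrightarrow> c = 1 \<or> c = -1)"

definition irreducible_root_system :: "'a::euclidean_space set \<Rightarrow> bool" where
  "irreducible_root_system \<Phi> \<longleftrightarrow> root_system \<Phi> \<and>
     \<not> (\<exists>A B. A \<noteq> {} \<and> B \<noteq> {} \<and> A \<union> B = \<Phi> \<and> (\<forall>a\<in>A. \<forall>b\<in>B. a \<bullet> b = 0))"

definition nonneg_comb :: "'a::euclidean_space set \<Rightarrow> 'a \<Rightarrow> bool" where
  "nonneg_comb \<Delta> v \<longleftrightarrow> (\<exists>c::'a \<Rightarrow> nat. v = (\<Sum>\<alpha>\<in>\<Delta>. real (c \<alpha>) *\<^sub>R \<alpha>))"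

definition root_basis :: "'a::euclidean_space set \<Rightarrow> 'a set \<Rightarrow> bool" where
  "root_basis \<Phi> \<Delta> \<longleftrightarrow> \<Delta> \<subseteq> \<Phi> \<and> independent \<Delta> \<and>
     (\<forall>\<beta>\<in>\<Phi>. nonneg_comb \<Delta> \<beta> \<or> nonneg_comb \<Delta> (- \<beta>))"

definition pos_roots :: "'a::euclidean_space set \<Rightarrow> 'a set \<Rightarrow> 'a set" where
  "pos_roots \<Phi> \<Delta> = {\<beta>\<in>\<Phi>. nonneg_comb \<Delta> \<beta>}"

definition root_le :: "'a::euclidean_space set \<Rightarrow> 'a \<Rightarrow> 'a \<Rightarrow> bool" where
  "root_le \<Delta> \<gamma> \<beta> \<longleftrightarrow> nonneg_comb \<Delta> (\<beta> - \<gamma>)"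

definition highest_root :: "'a::euclidean_space set \<Rightarrow> 'a set \<Rightarrow> 'a" where
  "highest_root \<Phi> \<Delta> = (THE \<theta>. \<theta> \<in> pos_roots \<Phi> \<Delta> \<and> (\<forall>\<beta>\<in>pos_roots \<Phi> \<Delta>. root_le \<Delta> \<beta> \<theta>))"

definition root_coeff :: "'a::euclidean_space set \<Rightarrow> 'a \<Rightarrow> 'a \<Rightarrow> real" where
  "root_coeff \<Delta> \<beta> \<alpha> = representation \<Delta> \<beta> \<alpha>"

definition refl_word :: "'a::euclidean_space list \<Rightarrow> 'a \<Rightarrow> 'a" where
  "refl_word ws = foldr (\<lambda>\<alpha> f. refl \<alpha> \<circ> f) ws id"

text \<open>Weyl group: the group generated by all reflections s_alpha, alpha in Phi
  (finite products suffice since reflections are involutions).\<close>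
definition weyl_group :: "'a::euclidean_space set \<Rightarrow> ('a \<Rightarrow> 'a) set" where
  "weyl_group \<Phi> = {refl_word ws | ws. set ws \<subseteq> \<Phi>}"

definition weyl_length :: "'a::euclidean_space set \<Rightarrow> ('a \<Rightarrow> 'a) \<Rightarrow> nat" where
  "weyl_length \<Delta> w = (LEAST k. \<exists>ws. set ws \<subseteq> \<Delta> \<and> length ws = k \<and> refl_word ws = w)"

definition right_descents :: "'a::euclidean_space set \<Rightarrow> ('a \<Rightarrow> 'a) \<Rightarrow> 'a set" where
  "right_descents \<Delta> w = {\<alpha>\<in>\<Delta>. weyl_length \<Delta> (w \<circ> refl \<alpha>) < weyl_length \<Delta> w}"

definition min_coset_reps :: "'a::euclidean_space set \<Rightarrow> 'a set \<Rightarrow> 'a \<Rightarrow> ('a \<Rightarrow> 'a) set" where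
  "min_coset_reps \<Phi> \<Delta> \<alpha>i = {w \<in> weyl_group \<Phi>. right_descents \<Delta> w \<subseteq> {\<alpha>i}}"

definition inv_set :: "'a::euclidean_space set \<Rightarrow> 'a set \<Rightarrow> ('a \<Rightarrow> 'a) \<Rightarrow> 'a set" where
  "inv_set \<Phi> \<Delta> w = {\<beta> \<in> pos_roots \<Phi> \<Delta>. w \<beta> \<in> uminus ` pos_roots \<Phi> \<Delta>}"

definition M_set :: "'a::euclidean_space set \<Rightarrow> 'a set \<Rightarrow> 'a \<Rightarrow> 'a set" where
  "M_set \<Phi> \<Delta> \<alpha>i = {\<beta> \<in> pos_roots \<Phi> \<Delta>. root_le \<Delta> \<alpha>i \<beta>}"

definition abelian_ideal :: "'a::euclidean_space set \<Rightarrow> 'a set \<Rightarrow> 'a set \<Rightarrow> bool" where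
  "abelian_ideal \<Phi> \<Delta> I \<longleftrightarrow> I \<subseteq> pos_roots \<Phi> \<Delta> \<and>
     (\<forall>\<beta>\<in>I. \<forall>\<gamma>\<in>pos_roots \<Phi> \<Delta>. root_le \<Delta> \<beta> \<gamma> \<longrightarrow> \<gamma> \<in> I) \<and>
     (\<forall>\<beta>\<in>I. \<forall>\<gamma>\<in>I. \<beta> + \<gamma> \<notin> \<Phi>)"

end

theory Submission
  imports Defs
begin


locale RS =
  fixes \<Phi> \<Delta> :: "'a::euclidean_space set"
  assumes rs: "root_system \<Phi>" and rb: "root_basis \<Phi> \<Delta>"
begin

definition coef :: "'a \<Rightarrow> 'a \<Rightarrow> real" where "coef v a = representation \<Delta> v a"
abbreviation pos where "pos \<equiv> pos_roots \<Phi> \<Delta>"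
definition neg where "neg x \<longleftrightarrow> -x \<in> pos"

lemma finPhi: "finite \<Phi>" and zero_notin: "0 \<notin> \<Phi>" and span_Phi: "span \<Phi> = UNIV"
  and refl_closed: "\<alpha> \<in> \<Phi> \<Longrightarrow> \<beta> \<in> \<Phi> \<Longrightarrow> refl \<alpha> \<beta> \<in> \<Phi>"
  and cartan: "\<alpha> \<in> \<Phi> \<Longrightarrow> \<beta> \<in> \<Phi> \<Longrightarrow> 2 * (\<beta> \<bullet> \<alpha>) / (\<alpha> \<bullet> \<alpha>) \<in> \<int>"
  and reduced: "\<alpha> \<in> \<Phi> \<Longrightarrow> c *\<^sub>R \<alpha> \<in> \<Phi> \<Longrightarrow> c = 1 \<or> c = -1"
  using rs unfolding root_system_def by auto

lemma D_sub: "\<Delta> \<subseteq> \<Phi>" and indep: "independent \<Delta>"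
  and rootcomb: "\<beta> \<in> \<Phi> \<Longrightarrow> nonneg_comb \<Delta> \<beta> \<or> nonneg_comb \<Delta> (-\<beta>)"
  using rb unfolding root_basis_def by auto

lemma finD: "finite \<Delta>" using D_sub finPhi finite_subset by blast

lemma nonneg_comb_span: "nonneg_comb \<Delta> v \<Longrightarrow> v \<in> span \<Delta>"
  unfolding nonneg_comb_def
  apply (elim exE) apply simp apply (rule span_sum) apply (rule span_scale) apply (rule span_base) by auto

lemma spanD: "span \<Delta> = UNIV"
proof -
  have "\<Phi> \<subseteq> span \<Delta>"
  proof
    fix b assume "b \<in> \<Phi>"
    from rootcomb[OF this] show "b \<in> span \<Delta>"
      by (metis nonneg_comb_span span_neg verit_minus_simplify(4))
  qed
  hence "span \<Phi> \<subseteq> span \<Delta>" by (simp add: span_minimal)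
  with span_Phi show ?thesis by auto
qed

lemma inspan[simp]: "v \<in> span \<Delta>" by (simp add: spanD)

lemma coef_add: "coef (u + v) a = coef u a + coef v a"
  unfolding coef_def using real_vector.representation_add[OF indep] by simp
lemma coef_diff: "coef (u - v) a = coef u a - coef v a"
  unfolding coef_def using real_vector.representation_diff[OF indep] by simp
lemma coef_neg: "coef (- v) a = - coef v a"
  unfolding coef_def using real_vector.representation_neg[OF indep] by simp
lemma coef_scale: "coef (r *\<^sub>R v) a = r * coef v a"
  unfolding coef_def using real_vector.representation_scale[OF indep] by simp
lemma coef_sum: "coef (sum f I) a = (\<Sum>i\<in>I. coef (f i) a)"
  unfolding coef_def by (rule fun_cong[OF real_vector.representation_sum[OF indep]]) simp
lemma coef_basis: "b \<in> \<Delta> \<Longrightarrow> coef b a = (if a = b then 1 else 0)"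
  unfolding coef_def using real_vector.representation_basis[OF indep] by simp
lemma coef_expand: "v = (\<Sum>a\<in>\<Delta>. coef v a *\<^sub>R a)"
  unfolding coef_def using real_vector.sum_representation_eq[OF indep inspan finD] by simp
lemma coef_zero: "coef 0 a = 0"
  unfolding coef_def by (simp add: real_vector.representation_zero)

lemma coef_eq0: "(\<forall>a\<in>\<Delta>. coef v a = 0) \<Longrightarrow> v = 0"
  by (subst coef_expand) simp

lemma nonneg_comb_iff: "nonneg_comb \<Delta> v \<longleftrightarrow> (\<forall>a\<in>\<Delta>. coef v a \<in> \<nat>)"
proof
  assume "nonneg_comb \<Delta> v"
  then obtain c where c: "v = (\<Sum>\<alpha>\<in>\<Delta>. real (c \<alpha>) *\<^sub>R \<alpha>)" unfolding nonneg_comb_def by blast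
  show "\<forall>a\<in>\<Delta>. coef v a \<in> \<nat>"
  proof
    fix a assume a: "a \<in> \<Delta>"
    have "coef v a = (\<Sum>\<alpha>\<in>\<Delta>. real (c \<alpha>) * (if a = \<alpha> then 1 else 0))"
      unfolding c coef_sum coef_scale by (intro sum.cong) (auto simp: coef_basis)
    also have "\<dots> = real (c a)" using a finD by (simp add: if_distrib sum.delta cong: if_cong)
    finally show "coef v a \<in> \<nat>" by simp
  qed
next
  assume h: "\<forall>a\<in>\<Delta>. coef v a \<in> \<nat>"
  define c where "c a = (SOME n. coef v a = real n)" for a
  have "coef v a = real (c a)" if "a \<in> \<Delta>" for a
    using h that unfolding c_def by (metis (mono_tags, lifting) Nats_cases someI_ex)
  hence "v = (\<Sum>\<alpha>\<in>\<Delta>. real (c \<alpha>) *\<^sub>R \<alpha>)"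
    by (subst coef_expand) (auto intro: sum.cong)
  thus "nonneg_comb \<Delta> v" unfolding nonneg_comb_def by blast
qed

lemma coef_int: "\<beta> \<in> \<Phi> \<Longrightarrow> coef \<beta> a \<in> \<int>"
proof -
  assume b: "\<beta> \<in> \<Phi>"
  show ?thesis
  proof (cases "a \<in> \<Delta>")
    case False
    have "coef \<beta> a = 0" unfolding coef_def using False real_vector.representation_ne_zero by metis
    thus ?thesis by simp
  next
    case True
    from rootcomb[OF b] show ?thesis
      using True Nats_subset_Ints by (auto simp: nonneg_comb_iff coef_neg)
  qed
qed

lemma refl_self: "b \<noteq> 0 \<Longrightarrow> refl b b = - b"
  unfolding refl_def by (simp add: scaleR_2)

lemma neg_closed: "\<beta> \<in> \<Phi> \<Longrightarrow> -\<beta> \<in> \<Phi>"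
  using refl_self refl_closed zero_notin by metis

lemma neg_closed_iff: "-\<beta> \<in> \<Phi> \<longleftrightarrow> \<beta> \<in> \<Phi>"
  using neg_closed by force

lemma pos_iff: "\<beta> \<in> pos \<longleftrightarrow> \<beta> \<in> \<Phi> \<and> (\<forall>a\<in>\<Delta>. coef \<beta> a \<ge> 0)"
  unfolding pos_roots_def nonneg_comb_iff using coef_int Nats_altdef2 by auto

lemma neg_iff: "neg \<beta> \<longleftrightarrow> \<beta> \<in> \<Phi> \<and> (\<forall>a\<in>\<Delta>. coef \<beta> a \<le> 0)"
proof -
  show ?thesis using neg_closed_iff unfolding neg_def pos_iff by (auto simp: coef_neg)
qed

end

context RS begin

lemma root_nz: "a \<in> \<Phi> \<Longrightarrow> a \<noteq> 0" using zero_notin by auto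

lemma pos_sub: "\<beta> \<in> pos \<Longrightarrow> \<beta> \<in> \<Phi>" by (simp add: pos_iff)

lemma pos_not_neg: "\<beta> \<in> pos \<Longrightarrow> \<not> neg \<beta>"
proof
  assume p: "\<beta> \<in> pos" and n: "neg \<beta>"
  hence "\<forall>a\<in>\<Delta>. coef \<beta> a = 0" using pos_iff neg_iff by force
  hence "\<beta> = 0" by (rule coef_eq0)
  with p pos_sub root_nz show False by blast
qed

lemma root_pos_or_neg: "\<beta> \<in> \<Phi> \<Longrightarrow> \<beta> \<in> pos \<or> neg \<beta>"
  using rootcomb[of \<beta>] neg_closed unfolding neg_def pos_roots_def by auto

lemma D_pos: "a \<in> \<Delta> \<Longrightarrow> a \<in> pos"
  using D_sub by (auto simp: pos_iff coef_basis)

lemma root_le_iff: "\<beta> \<in> \<Phi> \<Longrightarrow> \<gamma> \<in> \<Phi> \<Longrightarrow> root_le \<Delta> \<gamma> \<beta> \<longleftrightarrow> (\<forall>a\<in>\<Delta>. coef \<gamma> a \<le> coef \<beta> a)"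
  unfolding root_le_def nonneg_comb_iff coef_diff Nats_altdef2
  using coef_int by auto

lemma refl_linear: "linear (refl a)"
  unfolding refl_def by (intro linearI) (auto simp: algebra_simps inner_add_left inner_scaleR_left add_divide_distrib scaleR_add_left)

lemma refl_add: "refl a (x + y) = refl a x + refl a y"
  using refl_linear linear_add by blast
lemma refl_scale: "refl a (c *\<^sub>R x) = c *\<^sub>R refl a x"
  using refl_linear linear_scale by blast
lemma refl_minus: "refl a (- x) = - refl a x"
  using refl_linear linear_neg by blast
lemma refl_diff: "refl a (x - y) = refl a x - refl a y"
  using refl_linear linear_diff by blast

lemma refl_inner: "a \<noteq> 0 \<Longrightarrow> refl a x \<bullet> refl a y = x \<bullet> y"
  unfolding refl_def by (simp add: inner_diff_left inner_diff_right inner_commute algebra_simps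
    power2_eq_square divide_simps)

lemma refl_invol: "a \<noteq> 0 \<Longrightarrow> refl a (refl a x) = x"
  unfolding refl_def by (simp add: inner_diff_left algebra_simps divide_simps)

lemma refl_uminus: "refl (- a) = refl a"
  unfolding refl_def by (auto simp: fun_eq_iff)

lemma refl_coef: "coef (refl a x) b = coef x b - (2 * (x \<bullet> a) / (a \<bullet> a)) * coef a b"
  unfolding refl_def by (simp add: coef_diff coef_scale)

lemma refl_simple_coef: "a \<in> \<Delta> \<Longrightarrow> b \<noteq> a \<Longrightarrow> coef (refl a x) b = coef x b"
  by (simp add: refl_coef coef_basis)

lemma pos_other_coef:
  assumes r: "\<rho> \<in> pos" and a: "\<alpha> \<in> \<Delta>" and ne: "\<rho> \<noteq> \<alpha>"
  shows "\<exists>\<gamma>\<in>\<Delta>. \<gamma> \<noteq> \<alpha> \<and> coef \<rho> \<gamma> > 0"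
proof (rule ccontr)
  assume "\<not> ?thesis"
  hence z: "\<forall>\<gamma>\<in>\<Delta>. \<gamma> \<noteq> \<alpha> \<longrightarrow> coef \<rho> \<gamma> = 0" using r pos_iff by force
  have "\<rho> = (\<Sum>b\<in>\<Delta>. coef \<rho> b *\<^sub>R b)" by (rule coef_expand)
  also have "\<dots> = coef \<rho> \<alpha> *\<^sub>R \<alpha> + (\<Sum>b\<in>\<Delta>-{\<alpha>}. coef \<rho> b *\<^sub>R b)"
    using a finD by (simp add: sum.remove)
  also have "(\<Sum>b\<in>\<Delta>-{\<alpha>}. coef \<rho> b *\<^sub>R b) = 0" using z by (intro sum.neutral) auto
  finally have eq: "\<rho> = coef \<rho> \<alpha> *\<^sub>R \<alpha>" by simp
  have "coef \<rho> \<alpha> = 1 \<or> coef \<rho> \<alpha> = -1"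
    using reduced[of \<alpha> "coef \<rho> \<alpha>"] a D_sub r pos_sub eq by auto
  moreover have "coef \<rho> \<alpha> \<ge> 0" using r a pos_iff by auto
  ultimately have "coef \<rho> \<alpha> = 1" by auto
  with eq ne show False by simp
qed

lemma simple_refl_pos:
  assumes r: "\<beta> \<in> pos" and a: "\<alpha> \<in> \<Delta>" and ne: "\<beta> \<noteq> \<alpha>"
  shows "refl \<alpha> \<beta> \<in> pos"
proof -
  obtain \<gamma> where g: "\<gamma> \<in> \<Delta>" "\<gamma> \<noteq> \<alpha>" "coef \<beta> \<gamma> > 0" using pos_other_coef[OF assms] by blast
  have rt: "refl \<alpha> \<beta> \<in> \<Phi>" using refl_closed a D_sub r pos_sub by blast
  have "coef (refl \<alpha> \<beta>) \<gamma> > 0" using g a by (simp add: refl_simple_coef)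
  hence "\<not> neg (refl \<alpha> \<beta>)" using g neg_iff by force
  with root_pos_or_neg[OF rt] show ?thesis by blast
qed

lemma sum_root:
  assumes b: "\<beta> \<in> \<Phi>" and a: "\<alpha> \<in> \<Phi>" and lt: "\<beta> \<bullet> \<alpha> < 0" and ne: "\<beta> \<noteq> - \<alpha>"
  shows "\<beta> + \<alpha> \<in> \<Phi>"
proof -
  have an: "\<alpha> \<bullet> \<alpha> > 0" and bn: "\<beta> \<bullet> \<beta> > 0" using a b root_nz by auto
  define t where "t = (\<beta> \<bullet> \<alpha>) / (\<alpha> \<bullet> \<alpha>)"
  have vnz: "\<beta> - t *\<^sub>R \<alpha> \<noteq> 0"
  proof
    assume "\<beta> - t *\<^sub>R \<alpha> = 0"
    hence eq: "\<beta> = t *\<^sub>R \<alpha>" by simp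
    hence "t = 1 \<or> t = -1" using reduced[OF a] b by auto
    thus False
    proof
      assume "t = 1" with eq lt an show False by simp
    next
      assume "t = -1" with eq ne show False by simp
    qed
  qed
  have "0 < (\<beta> - t *\<^sub>R \<alpha>) \<bullet> (\<beta> - t *\<^sub>R \<alpha>)" using vnz by simp
  also have "\<dots> = \<beta> \<bullet> \<beta> - (\<beta> \<bullet> \<alpha>)^2 / (\<alpha> \<bullet> \<alpha>)"
    unfolding t_def using an
    by (simp add: inner_diff_left inner_diff_right inner_commute power2_eq_square divide_simps)
  finally have cs: "(\<beta> \<bullet> \<alpha>)^2 < (\<alpha> \<bullet> \<alpha>) * (\<beta> \<bullet> \<beta>)" using an by (simp add: divide_simps mult.commute)
  define n1 where "n1 = 2 * (\<beta> \<bullet> \<alpha>) / (\<alpha> \<bullet> \<alpha>)"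
  define n2 where "n2 = 2 * (\<alpha> \<bullet> \<beta>) / (\<beta> \<bullet> \<beta>)"
  have i1: "n1 \<in> \<int>" using cartan[OF a b] n1_def by simp
  have i2: "n2 \<in> \<int>" using cartan[OF b a] n2_def by simp
  have n1neg: "n1 < 0" using lt an by (simp add: n1_def divide_simps)
  have n2neg: "n2 < 0" using lt bn by (simp add: n2_def divide_simps inner_commute)
  have prod: "n1 * n2 < 4"
    using cs an bn by (simp add: n1_def n2_def inner_commute divide_simps power2_eq_square)
  have "n1 = -1 \<or> n2 = -1"
  proof (rule ccontr)
    assume nt: "\<not> (n1 = -1 \<or> n2 = -1)"
    obtain k1 where k1: "n1 = of_int k1" using i1 Ints_cases by blast
    obtain k2 where k2: "n2 = of_int k2" using i2 Ints_cases by blast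
    have "k1 \<le> -2" "k2 \<le> -2" using nt n1neg n2neg k1 k2 by auto
    hence "(-k1) * (-k2) \<ge> 2 * 2" by (intro mult_mono) auto
    hence "k1 * k2 \<ge> 4" by simp
    hence "real_of_int (k1 * k2) \<ge> 4" by linarith
    hence "n1 * n2 \<ge> 4" using k1 k2 by simp
    with prod show False by simp
  qed
  thus ?thesis
  proof
    assume "n1 = -1"
    hence "refl \<alpha> \<beta> = \<beta> + \<alpha>" unfolding refl_def n1_def[symmetric] by simp
    with refl_closed[OF a b] show ?thesis by simp
  next
    assume "n2 = -1"
    hence "refl \<beta> \<alpha> = \<beta> + \<alpha>" unfolding refl_def n2_def[symmetric] by simp
    with refl_closed[OF b a] show ?thesis by simp
  qed
qed

end


lemma finite_argmax:
  fixes f :: "'b \<Rightarrow> real"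
  assumes "finite S" "S \<noteq> {}" shows "\<exists>x\<in>S. \<forall>y\<in>S. f y \<le> f x"
proof -
  have "Max (f ` S) \<in> f ` S" using assms by (intro Max_in) auto
  then obtain x where "x \<in> S" "f x = Max (f ` S)" by auto
  moreover have "\<forall>y\<in>S. f y \<le> Max (f ` S)" using assms by auto
  ultimately show ?thesis by metis
qed

context RS begin

definition ht :: "'a \<Rightarrow> real" where "ht v = (\<Sum>a\<in>\<Delta>. coef v a)"

lemma ht_add: "ht (u + v) = ht u + ht v" unfolding ht_def coef_add by (simp add: sum.distrib)
lemma ht_diff: "ht (u - v) = ht u - ht v" unfolding ht_def coef_diff by (simp add: sum_subtractf)
lemma ht_simple: "a \<in> \<Delta> \<Longrightarrow> ht a = 1"
  unfolding ht_def using finD by (simp add: coef_basis sum.delta)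

lemma ht_int: "\<beta> \<in> \<Phi> \<Longrightarrow> ht \<beta> \<in> \<int>"
  unfolding ht_def using coef_int by (intro Ints_sum) auto

lemma ht_nonneg: "\<beta> \<in> pos \<Longrightarrow> ht \<beta> \<ge> 0"
  unfolding ht_def by (intro sum_nonneg) (auto simp: pos_iff)

lemma pos_has_coef: "\<beta> \<in> pos \<Longrightarrow> \<exists>a\<in>\<Delta>. coef \<beta> a > 0"
proof (rule ccontr)
  assume p: "\<beta> \<in> pos" and "\<not> (\<exists>a\<in>\<Delta>. coef \<beta> a > 0)"
  hence "\<forall>a\<in>\<Delta>. coef \<beta> a = 0" using pos_iff by force
  hence "\<beta> = 0" by (rule coef_eq0)
  with p pos_sub root_nz show False by blast
qed

lemma ht_pos: "\<beta> \<in> pos \<Longrightarrow> ht \<beta> > 0"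
proof -
  assume p: "\<beta> \<in> pos"
  then obtain a where "a \<in> \<Delta>" "coef \<beta> a > 0" using pos_has_coef by blast
  thus ?thesis unfolding ht_def using p finD by (intro sum_pos2[of _ a]) (auto simp: pos_iff)
qed

lemma pos_induct[consumes 1, case_names step]:
  assumes b: "\<beta> \<in> pos" and step: "\<And>\<beta>. \<beta> \<in> pos \<Longrightarrow> (\<And>\<gamma>. \<gamma> \<in> pos \<Longrightarrow> ht \<gamma> < ht \<beta> \<Longrightarrow> P \<gamma>) \<Longrightarrow> P \<beta>"
  shows "P \<beta>"
  using b
proof (induction "nat \<lfloor>ht \<beta>\<rfloor>" arbitrary: \<beta> rule: less_induct)
  case less
  show ?case
  proof (rule step[OF less.prems])
    fix \<gamma> assume g: "\<gamma> \<in> pos" "ht \<gamma> < ht \<beta>"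
    have "nat \<lfloor>ht \<gamma>\<rfloor> < nat \<lfloor>ht \<beta>\<rfloor>"
      using g less.prems ht_int[OF pos_sub] ht_nonneg
      by (metis Ints_cases floor_of_int nat_less_eq_zless of_int_0_le_iff of_int_less_iff)
    thus "P \<gamma>" using less.hyps g by blast
  qed
qed

lemma exists_pos_inner: "\<rho> \<in> pos \<Longrightarrow> \<exists>\<alpha>\<in>\<Delta>. \<rho> \<bullet> \<alpha> > 0"
proof (rule ccontr)
  assume p: "\<rho> \<in> pos" and h: "\<not> (\<exists>\<alpha>\<in>\<Delta>. \<rho> \<bullet> \<alpha> > 0)"
  have "\<rho> \<bullet> \<rho> = (\<Sum>a\<in>\<Delta>. coef \<rho> a *\<^sub>R a) \<bullet> \<rho>" by (subst coef_expand) simp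
  also have "\<dots> = (\<Sum>a\<in>\<Delta>. coef \<rho> a * (a \<bullet> \<rho>))" by (simp add: inner_sum_left)
  also have "\<dots> \<le> 0" using h p
    by (intro sum_nonpos) (auto simp: pos_iff inner_commute mult_nonneg_nonpos)
  finally have "\<rho> \<bullet> \<rho> \<le> 0" .
  hence "\<rho> = 0" by (metis inner_gt_zero_iff not_less)
  with p pos_sub root_nz show False by blast
qed

lemma pos_sub_simple:
  assumes p: "\<rho> \<in> pos" and nd: "\<rho> \<notin> \<Delta>"
  shows "\<exists>\<alpha>\<in>\<Delta>. \<rho> - \<alpha> \<in> pos"
proof -
  obtain \<alpha> where a: "\<alpha> \<in> \<Delta>" "\<rho> \<bullet> \<alpha> > 0" using exists_pos_inner[OF p] by blast
  have ne: "\<rho> \<noteq> \<alpha>" using a nd by auto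
  have "\<rho> + - \<alpha> \<in> \<Phi>"
    using sum_root[of \<rho> "-\<alpha>"] p pos_sub a D_sub neg_closed ne by auto
  hence rt: "\<rho> - \<alpha> \<in> \<Phi>" by simp
  obtain \<gamma> where g: "\<gamma> \<in> \<Delta>" "\<gamma> \<noteq> \<alpha>" "coef \<rho> \<gamma> > 0" using pos_other_coef[OF p a(1) ne] by blast
  have "coef (\<rho> - \<alpha>) \<gamma> > 0" using g a by (simp add: coef_diff coef_basis)
  hence "\<not> neg (\<rho> - \<alpha>)" using g neg_iff by force
  with root_pos_or_neg[OF rt] a show ?thesis by blast
qed

lemma simple_inner_nonpos:
  assumes a: "\<alpha> \<in> \<Delta>" and g: "\<gamma> \<in> \<Delta>" and ne: "\<alpha> \<noteq> \<gamma>"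
  shows "\<alpha> \<bullet> \<gamma> \<le> 0"
proof (rule ccontr)
  assume "\<not> \<alpha> \<bullet> \<gamma> \<le> 0"
  hence "\<alpha> \<bullet> (-\<gamma>) < 0" by simp
  hence "\<alpha> + - \<gamma> \<in> \<Phi>" using sum_root[of \<alpha> "-\<gamma>"] a g D_sub neg_closed ne by auto
  hence rt: "\<alpha> - \<gamma> \<in> \<Phi>" by simp
  have "coef (\<alpha> - \<gamma>) \<alpha> = 1" "coef (\<alpha> - \<gamma>) \<gamma> = -1" using a g ne by (auto simp: coef_diff coef_basis)
  hence "\<alpha> - \<gamma> \<notin> pos" "\<not> neg (\<alpha> - \<gamma>)" using a g pos_iff neg_iff by force+
  with root_pos_or_neg[OF rt] show False by blast
qed

lemma max_inner:
  assumes p: "\<theta> \<in> pos" and mx: "\<forall>\<alpha>\<in>\<Delta>. \<theta> + \<alpha> \<notin> \<Phi>" and a: "\<alpha> \<in> \<Delta>"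
  shows "\<theta> \<bullet> \<alpha> \<ge> 0"
proof (rule ccontr)
  assume "\<not> \<theta> \<bullet> \<alpha> \<ge> 0"
  moreover have "\<theta> \<noteq> - \<alpha>"
  proof
    assume "\<theta> = -\<alpha>"
    hence "neg \<theta>" using D_pos[OF a] by (simp add: neg_def)
    with pos_not_neg[OF p] show False by blast
  qed
  ultimately have "\<theta> + \<alpha> \<in> \<Phi>" using sum_root[of \<theta> \<alpha>] p pos_sub a D_sub by auto
  with mx a show False by blast
qed

lemma inner_expand: "x \<bullet> y = (\<Sum>a\<in>\<Delta>. coef x a * (a \<bullet> y))"
proof -
  have "x \<bullet> y = (\<Sum>a\<in>\<Delta>. coef x a *\<^sub>R a) \<bullet> y" by (subst coef_expand) simp
  also have "\<dots> = (\<Sum>a\<in>\<Delta>. coef x a * (a \<bullet> y))" by (simp add: inner_sum_left)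
  finally show ?thesis .
qed

lemma split_helper:
  assumes KJ: "\<Delta> = K \<union> J" and orth: "\<forall>\<gamma>\<in>K. \<forall>\<alpha>\<in>J. \<gamma> \<bullet> \<alpha> = 0"
    and p: "\<rho> \<in> pos" and zJ: "\<forall>\<delta>\<in>J. coef \<rho> \<delta> = 0" and a: "\<alpha> \<in> J"
    and rt: "\<rho> + \<alpha> \<in> \<Phi>"
  shows False
proof -
  have aD: "\<alpha> \<in> \<Delta>" using a KJ by auto
  have "\<rho> \<bullet> \<alpha> = (\<Sum>g\<in>\<Delta>. coef \<rho> g * (g \<bullet> \<alpha>))" by (rule inner_expand)
  also have "\<dots> = 0"
    using KJ orth zJ a by (intro sum.neutral) auto
  finally have ra: "\<rho> \<bullet> \<alpha> = 0" .
  have an: "\<alpha> \<bullet> \<alpha> \<noteq> 0" using aD D_sub root_nz by auto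
  have "refl \<alpha> (\<rho> + \<alpha>) = \<rho> - \<alpha>"
    unfolding refl_def using ra an by (simp add: inner_add_left scaleR_2)
  hence rt2: "\<rho> - \<alpha> \<in> \<Phi>" using refl_closed[OF _ rt] aD D_sub by fastforce
  have ca: "coef \<rho> \<alpha> = 0" using zJ a by auto
  hence "coef (\<rho> - \<alpha>) \<alpha> = -1" using aD by (simp add: coef_diff coef_basis)
  hence np: "\<rho> - \<alpha> \<notin> pos" using aD pos_iff by force
  have ne: "\<rho> \<noteq> \<alpha>" using ca aD by (auto simp: coef_basis)
  obtain \<gamma> where g: "\<gamma> \<in> \<Delta>" "\<gamma> \<noteq> \<alpha>" "coef \<rho> \<gamma> > 0" using pos_other_coef[OF p aD ne] by blast
  have "coef (\<rho> - \<alpha>) \<gamma> > 0" using g aD by (simp add: coef_diff coef_basis)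
  hence "\<not> neg (\<rho> - \<alpha>)" using g neg_iff by force
  with np root_pos_or_neg[OF rt2] show False by blast
qed

lemma split_roots:
  assumes KJ: "\<Delta> = K \<union> J" and disj: "K \<inter> J = {}" and orth: "\<forall>\<gamma>\<in>K. \<forall>\<alpha>\<in>J. \<gamma> \<bullet> \<alpha> = 0"
  shows "\<beta> \<in> pos \<Longrightarrow> (\<forall>\<delta>\<in>J. coef \<beta> \<delta> = 0) \<or> (\<forall>\<delta>\<in>K. coef \<beta> \<delta> = 0)"
proof (induction \<beta> rule: pos_induct)
  case (step \<rho>)
  have orth': "\<forall>\<gamma>\<in>J. \<forall>\<alpha>\<in>K. \<gamma> \<bullet> \<alpha> = 0" using orth by (metis inner_commute)
  have KJ': "\<Delta> = J \<union> K" using KJ by auto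
  show ?case
  proof (cases "\<rho> \<in> \<Delta>")
    case True
    have "\<rho> \<in> K \<or> \<rho> \<in> J" using True KJ by auto
    thus ?thesis using disj True by (auto simp: coef_basis)
  next
    case False
    then obtain \<alpha> where a: "\<alpha> \<in> \<Delta>" "\<rho> - \<alpha> \<in> pos" using pos_sub_simple[OF step(1)] by blast
    have "ht (\<rho> - \<alpha>) < ht \<rho>" using a by (simp add: ht_diff ht_simple)
    hence IH: "(\<forall>\<delta>\<in>J. coef (\<rho> - \<alpha>) \<delta> = 0) \<or> (\<forall>\<delta>\<in>K. coef (\<rho> - \<alpha>) \<delta> = 0)"
      using step(2) a by blast
    have rt: "(\<rho> - \<alpha>) + \<alpha> \<in> \<Phi>" using step(1) pos_sub by simp
    from IH show ?thesis
    proof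
      assume z: "\<forall>\<delta>\<in>J. coef (\<rho> - \<alpha>) \<delta> = 0"
      show ?thesis
      proof (cases "\<alpha> \<in> J")
        case True
        with split_helper[OF KJ orth a(2) z True rt] show ?thesis by blast
      next
        case False
        hence "\<forall>\<delta>\<in>J. coef \<rho> \<delta> = 0" using z by (auto simp: coef_diff coef_basis a(1))
        thus ?thesis by blast
      qed
    next
      assume z: "\<forall>\<delta>\<in>K. coef (\<rho> - \<alpha>) \<delta> = 0"
      show ?thesis
      proof (cases "\<alpha> \<in> K")
        case True
        with split_helper[OF KJ' orth' a(2) z True rt] show ?thesis by blast
      next
        case False
        hence "\<forall>\<delta>\<in>K. coef \<rho> \<delta> = 0" using z by (auto simp: coef_diff coef_basis a(1))
        thus ?thesis by blast
      qed
    qed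
  qed
qed

end

context RS begin

lemma finite_pos: "finite pos" using finPhi by (rule finite_subset[rotated]) (auto simp: pos_iff)

lemma max_coef_pos:
  assumes irr: "irreducible_root_system \<Phi>" and p: "\<theta> \<in> pos" and mx: "\<forall>\<alpha>\<in>\<Delta>. \<theta> + \<alpha> \<notin> \<Phi>"
    and a: "\<alpha> \<in> \<Delta>"
  shows "coef \<theta> \<alpha> > 0"
proof (rule ccontr)
  assume "\<not> coef \<theta> \<alpha> > 0"
  hence a0: "coef \<theta> \<alpha> = 0" using p a pos_iff by force
  define J where "J = {a\<in>\<Delta>. coef \<theta> a = 0}"
  define K where "K = \<Delta> - J"
  have KJ: "\<Delta> = K \<union> J" and disj: "K \<inter> J = {}" unfolding K_def J_def by auto
  have aJ: "\<alpha> \<in> J" using a a0 J_def by auto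
  have Kpos: "\<And>g. g \<in> K \<Longrightarrow> coef \<theta> g > 0" using p pos_iff unfolding K_def J_def by force
  have orth: "\<forall>\<gamma>\<in>K. \<forall>b\<in>J. \<gamma> \<bullet> b = 0"
  proof (intro ballI)
    fix \<gamma> b assume g: "\<gamma> \<in> K" and b: "b \<in> J"
    have bD: "b \<in> \<Delta>" using b J_def by auto
    have terms: "\<And>g. g \<in> \<Delta> \<Longrightarrow> 0 \<le> - (coef \<theta> g * (g \<bullet> b))"
    proof -
      fix g assume gD: "g \<in> \<Delta>"
      show "0 \<le> - (coef \<theta> g * (g \<bullet> b))"
      proof (cases "g = b")
        case True then show ?thesis using b J_def by auto
      next
        case False
        have "coef \<theta> g \<ge> 0" using p gD pos_iff by auto
        moreover have "g \<bullet> b \<le> 0" using simple_inner_nonpos[OF gD bD False] .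
        ultimately show ?thesis by (simp add: mult_nonneg_nonpos)
      qed
    qed
    have "\<theta> \<bullet> b = (\<Sum>g\<in>\<Delta>. coef \<theta> g * (g \<bullet> b))" by (rule inner_expand)
    moreover have "\<theta> \<bullet> b \<ge> 0" using max_inner[OF p mx bD] .
    moreover have "(\<Sum>g\<in>\<Delta>. - (coef \<theta> g * (g \<bullet> b))) \<ge> 0" using terms by (rule sum_nonneg)
    ultimately have "(\<Sum>g\<in>\<Delta>. - (coef \<theta> g * (g \<bullet> b))) = 0" by (simp add: sum_negf)
    hence "\<forall>g\<in>\<Delta>. - (coef \<theta> g * (g \<bullet> b)) = 0" using sum_nonneg_eq_0_iff[OF finD, of "\<lambda>g. - (coef \<theta> g * (g \<bullet> b))"] terms by blast
    hence "coef \<theta> \<gamma> * (\<gamma> \<bullet> b) = 0" using g KJ by auto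
    thus "\<gamma> \<bullet> b = 0" using Kpos[OF g] by simp
  qed
  obtain k where k: "k \<in> \<Delta>" "coef \<theta> k > 0" using pos_has_coef[OF p] by blast
  hence kK: "k \<in> K" unfolding K_def J_def by auto
  define A where "A = {\<beta>\<in>\<Phi>. \<forall>\<delta>\<in>J. coef \<beta> \<delta> = 0}"
  define B where "B = {\<beta>\<in>\<Phi>. \<forall>\<delta>\<in>K. coef \<beta> \<delta> = 0}"
  have AB: "A \<union> B = \<Phi>"
  proof
    show "A \<union> B \<subseteq> \<Phi>" unfolding A_def B_def by auto
    show "\<Phi> \<subseteq> A \<union> B"
    proof
      fix \<beta> assume b: "\<beta> \<in> \<Phi>"
      from root_pos_or_neg[OF b] show "\<beta> \<in> A \<union> B"
      proof
        assume "\<beta> \<in> pos"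
        from split_roots[OF KJ disj orth this] b show ?thesis unfolding A_def B_def by auto
      next
        assume "neg \<beta>"
        hence "-\<beta> \<in> pos" by (simp add: neg_def)
        from split_roots[OF KJ disj orth this] b show ?thesis unfolding A_def B_def
          by (auto simp: coef_neg)
      qed
    qed
  qed
  have kA: "k \<in> A" using kK k D_sub disj unfolding A_def by (auto simp: coef_basis)
  have aB: "\<alpha> \<in> B" using aJ a D_sub disj unfolding B_def by (auto simp: coef_basis)
  have orthAB: "\<forall>x\<in>A. \<forall>y\<in>B. x \<bullet> y = 0"
  proof (intro ballI)
    fix x y assume x: "x \<in> A" and y: "y \<in> B"
    have "x \<bullet> y = (\<Sum>g\<in>\<Delta>. coef x g * (g \<bullet> y))" by (rule inner_expand)
    also have "\<dots> = 0"
    proof (intro sum.neutral ballI)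
      fix g assume gD: "g \<in> \<Delta>"
      show "coef x g * (g \<bullet> y) = 0"
      proof (cases "g \<in> J")
        case True then show ?thesis using x A_def by auto
      next
        case False
        hence gK: "g \<in> K" using gD KJ by auto
        have "g \<bullet> y = y \<bullet> g" by (simp add: inner_commute)
        also have "\<dots> = (\<Sum>h\<in>\<Delta>. coef y h * (h \<bullet> g))" by (rule inner_expand)
        also have "\<dots> = 0"
        proof (intro sum.neutral ballI)
          fix h assume hD: "h \<in> \<Delta>"
          show "coef y h * (h \<bullet> g) = 0"
          proof (cases "h \<in> K")
            case True then show ?thesis using y B_def by auto
          next
            case False
            hence "h \<in> J" using hD KJ by auto
            hence "g \<bullet> h = 0" using orth gK by auto
            thus ?thesis by (simp add: inner_commute)
          qed
        qed
        finally show ?thesis by simp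
      qed
    qed
    finally show "x \<bullet> y = 0" .
  qed
  have "\<exists>A B. A \<noteq> {} \<and> B \<noteq> {} \<and> A \<union> B = \<Phi> \<and> (\<forall>a\<in>A. \<forall>b\<in>B. a \<bullet> b = 0)"
    using AB kA aB orthAB by blast
  with irr show False unfolding irreducible_root_system_def by blast
qed

lemma D_nonempty: "\<Delta> \<noteq> {}"
proof
  assume "\<Delta> = {}"
  hence "span \<Delta> = {0}" by simp
  moreover obtain b :: 'a where "b \<in> Basis" using nonempty_Basis by blast
  hence "b \<noteq> 0" by (simp add: nonzero_Basis)
  ultimately show False using spanD by auto
qed

lemma pos_add_simple:
  assumes p: "\<theta> \<in> pos" and a: "\<alpha> \<in> \<Delta>" and r: "\<theta> + \<alpha> \<in> \<Phi>"
  shows "\<theta> + \<alpha> \<in> pos"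
  using p a r D_pos[OF a] by (auto simp: pos_iff coef_add)

lemma highest_exists:
  assumes irr: "irreducible_root_system \<Phi>"
  shows "\<exists>\<theta>\<in>pos. \<forall>\<beta>\<in>pos. root_le \<Delta> \<beta> \<theta>"
proof -
  have pne: "pos \<noteq> {}" using D_nonempty D_pos by blast
  obtain \<theta> where th: "\<theta> \<in> pos" "\<forall>y\<in>pos. ht y \<le> ht \<theta>"
    using finite_argmax[OF finite_pos pne, of ht] by blast
  have mxt: "\<forall>\<alpha>\<in>\<Delta>. \<theta> + \<alpha> \<notin> \<Phi>"
  proof (intro ballI notI)
    fix \<alpha> assume a: "\<alpha> \<in> \<Delta>" and r: "\<theta> + \<alpha> \<in> \<Phi>"
    have "\<theta> + \<alpha> \<in> pos" using pos_add_simple[OF th(1) a r] .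
    hence "ht (\<theta> + \<alpha>) \<le> ht \<theta>" using th by blast
    thus False using a by (simp add: ht_add ht_simple)
  qed
  have "root_le \<Delta> \<beta> \<theta>" if b: "\<beta> \<in> pos" for \<beta>
  proof -
    define S where "S = {\<gamma>\<in>pos. root_le \<Delta> \<beta> \<gamma>}"
    have bS: "\<beta> \<in> S" using b pos_sub unfolding S_def by (auto simp: root_le_iff)
    have fS: "finite S" using finite_pos S_def by auto
    obtain b' where b': "b' \<in> S" "\<forall>y\<in>S. ht y \<le> ht b'"
      using finite_argmax[OF fS, of ht] bS by blast
    have b'p: "b' \<in> pos" and bb': "root_le \<Delta> \<beta> b'" using b' S_def by auto
    have mxb: "\<forall>\<alpha>\<in>\<Delta>. b' + \<alpha> \<notin> \<Phi>"
    proof (intro ballI notI)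
      fix \<alpha> assume a: "\<alpha> \<in> \<Delta>" and r: "b' + \<alpha> \<in> \<Phi>"
      have p2: "b' + \<alpha> \<in> pos" using pos_add_simple[OF b'p a r] .
      have "root_le \<Delta> \<beta> (b' + \<alpha>)"
        using bb' b pos_sub b'p r D_pos[OF a]
        by (auto simp: root_le_iff coef_add pos_iff) (smt (verit))
      hence "b' + \<alpha> \<in> S" using p2 S_def by auto
      hence "ht (b' + \<alpha>) \<le> ht b'" using b' by blast
      thus False using a by (simp add: ht_add ht_simple)
    qed
    have cpos: "\<forall>a\<in>\<Delta>. coef b' a > 0" using max_coef_pos[OF irr b'p mxb] by blast
    obtain a0 where a0: "a0 \<in> \<Delta>" "\<theta> \<bullet> a0 > 0" using exists_pos_inner[OF th(1)] by blast
    have "b' \<bullet> \<theta> = (\<Sum>a\<in>\<Delta>. coef b' a * (a \<bullet> \<theta>))" by (rule inner_expand)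
    also have "\<dots> > 0"
    proof (rule sum_pos2[OF finD a0(1)])
      show "0 < coef b' a0 * (a0 \<bullet> \<theta>)" using cpos a0 by (simp add: inner_commute)
      fix a assume aD: "a \<in> \<Delta>"
      have "0 \<le> \<theta> \<bullet> a" using max_inner[OF th(1) mxt aD] .
      hence "0 \<le> a \<bullet> \<theta>" by (simp add: inner_commute)
      moreover have "0 \<le> coef b' a" using cpos aD less_imp_le by blast
      ultimately show "0 \<le> coef b' a * (a \<bullet> \<theta>)" by simp
    qed
    finally have ip: "\<theta> \<bullet> b' > 0" by (simp add: inner_commute)
    show ?thesis
    proof (cases "\<theta> = b'")
      case True then show ?thesis using bb' by simp
    next
      case False
      have "\<theta> + - b' \<in> \<Phi>"
        using sum_root[of \<theta> "-b'"] th(1) pos_sub b'p neg_closed ip False by auto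
      hence rt: "\<theta> - b' \<in> \<Phi>" by simp
      from root_pos_or_neg[OF rt] show ?thesis
      proof
        assume "\<theta> - b' \<in> pos"
        hence "\<forall>a\<in>\<Delta>. coef b' a \<le> coef \<theta> a" by (auto simp: pos_iff coef_diff)
        thus ?thesis using bb' b pos_sub b'p th(1) by (auto simp: root_le_iff) (meson order_trans)
      next
        assume "neg (\<theta> - b')"
        hence "b' - \<theta> \<in> pos" by (simp add: neg_def)
        hence "ht (b' - \<theta>) > 0" by (rule ht_pos)
        hence "ht b' > ht \<theta>" by (simp add: ht_diff)
        with th b'p show ?thesis by force
      qed
    qed
  qed
  with th show ?thesis by blast
qed

lemma highest_root_prop:
  assumes irr: "irreducible_root_system \<Phi>"
  shows "highest_root \<Phi> \<Delta> \<in> pos \<and> (\<forall>\<beta>\<in>pos. root_le \<Delta> \<beta> (highest_root \<Phi> \<Delta>))"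
proof -
  obtain \<theta> where th: "\<theta> \<in> pos" "\<forall>\<beta>\<in>pos. root_le \<Delta> \<beta> \<theta>" using highest_exists[OF irr] by blast
  have "highest_root \<Phi> \<Delta> = \<theta>"
    unfolding highest_root_def
  proof (rule the_equality)
    show "\<theta> \<in> pos \<and> (\<forall>\<beta>\<in>pos. root_le \<Delta> \<beta> \<theta>)" using th by blast
    fix t assume t: "t \<in> pos \<and> (\<forall>\<beta>\<in>pos. root_le \<Delta> \<beta> t)"
    hence "root_le \<Delta> t \<theta>" "root_le \<Delta> \<theta> t" using th by auto
    hence "\<forall>a\<in>\<Delta>. coef t a = coef \<theta> a" using t th pos_sub by (auto simp: root_le_iff) (meson order_antisym)
    hence "\<forall>a\<in>\<Delta>. coef (t - \<theta>) a = 0" by (simp add: coef_diff)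
    hence "t - \<theta> = 0" by (rule coef_eq0)
    thus "t = \<theta>" by simp
  qed
  with th show ?thesis by simp
qed

lemma coef_le_highest:
  assumes irr: "irreducible_root_system \<Phi>" and b: "\<beta> \<in> pos" and a: "a \<in> \<Delta>"
  shows "coef \<beta> a \<le> coef (highest_root \<Phi> \<Delta>) a"
  using highest_root_prop[OF irr] b a pos_sub by (auto simp: root_le_iff)

end

context RS begin

lemma rw_Nil[simp]: "refl_word [] = id" unfolding refl_word_def by simp
lemma rw_Cons[simp]: "refl_word (a # ws) = refl a \<circ> refl_word ws" unfolding refl_word_def by simp
lemma rw_append: "refl_word (xs @ ys) = refl_word xs \<circ> refl_word ys"
  by (induction xs) auto

lemma rw_linear: "linear (refl_word ws)"
proof (induction ws)
  case Nil then show ?case using linear_id by (simp add: id_def)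
next
  case (Cons a ws)
  have "linear (refl a \<circ> refl_word ws)" by (rule linear_compose[OF Cons.IH refl_linear])
  thus ?case by (simp only: rw_Cons)
qed

lemma rw_inner: "set ws \<subseteq> \<Phi> \<Longrightarrow> refl_word ws x \<bullet> refl_word ws y = x \<bullet> y"
  by (induction ws) (auto simp: refl_inner root_nz)

lemma rw_Phi: "set ws \<subseteq> \<Phi> \<Longrightarrow> \<beta> \<in> \<Phi> \<Longrightarrow> refl_word ws \<beta> \<in> \<Phi>"
  by (induction ws) (auto intro: refl_closed)

definition WG where "WG = weyl_group \<Phi>"

lemma WG_iff: "w \<in> WG \<longleftrightarrow> (\<exists>ws. set ws \<subseteq> \<Phi> \<and> w = refl_word ws)"
  unfolding WG_def weyl_group_def by auto

lemma WG_linear: "w \<in> WG \<Longrightarrow> linear w" using rw_linear WG_iff by auto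
lemma WG_inner: "w \<in> WG \<Longrightarrow> w x \<bullet> w y = x \<bullet> y" using rw_inner WG_iff by auto
lemma WG_Phi: "w \<in> WG \<Longrightarrow> \<beta> \<in> \<Phi> \<Longrightarrow> w \<beta> \<in> \<Phi>" using rw_Phi WG_iff by auto
lemma WG_inj: "w \<in> WG \<Longrightarrow> inj w"
proof (rule injI)
  fix x y assume w: "w \<in> WG" and e: "w x = w y"
  have "w (x - y) = 0" using e WG_linear[OF w] by (simp add: linear_diff)
  hence "(x - y) \<bullet> (x - y) = 0" using WG_inner[OF w, of "x - y" "x - y"] by simp
  thus "x = y" by simp
qed
lemma WG_surj: "w \<in> WG \<Longrightarrow> \<beta> \<in> \<Phi> \<Longrightarrow> \<exists>\<gamma>\<in>\<Phi>. w \<gamma> = \<beta>"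
proof -
  assume w: "w \<in> WG" and b: "\<beta> \<in> \<Phi>"
  have "w ` \<Phi> = \<Phi>"
    by (rule endo_inj_surj[OF finPhi]) (use WG_Phi[OF w] WG_inj[OF w] in \<open>auto simp: inj_on_def inj_def\<close>)
  with b show ?thesis by (metis imageE)
qed
lemma WG_refl: "\<alpha> \<in> \<Phi> \<Longrightarrow> w \<in> WG \<Longrightarrow> refl \<alpha> \<circ> w \<in> WG"
  unfolding WG_iff by (metis rw_Cons insert_subset list.set(2))
lemma WG_refl_right: "\<alpha> \<in> \<Phi> \<Longrightarrow> w \<in> WG \<Longrightarrow> w \<circ> refl \<alpha> \<in> WG"
proof -
  assume a: "\<alpha> \<in> \<Phi>" and "w \<in> WG"
  then obtain ws where "set ws \<subseteq> \<Phi>" "w = refl_word ws" by (auto simp: WG_iff)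
  hence "set (ws @ [\<alpha>]) \<subseteq> \<Phi>" "w \<circ> refl \<alpha> = refl_word (ws @ [\<alpha>])" using a by (auto simp: rw_append)
  thus ?thesis unfolding WG_iff by blast
qed

lemma conj_refl:
  assumes w: "w \<in> WG" and a: "\<alpha> \<noteq> 0"
  shows "refl (w \<alpha>) \<circ> w = w \<circ> refl \<alpha>"
proof
  fix x
  have l: "linear w" using WG_linear[OF w] .
  show "(refl (w \<alpha>) \<circ> w) x = (w \<circ> refl \<alpha>) x"
    unfolding refl_def o_def using WG_inner[OF w]
    by (simp add: linear_diff[OF l] linear_scale[OF l])
qed

definition WD where "WD = {refl_word ws | ws. set ws \<subseteq> \<Delta>}"

lemma WD_sub: "WD \<subseteq> WG" unfolding WD_def using D_sub by (auto simp: WG_iff) (metis order_trans)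

lemma WD_comp: "u \<in> WD \<Longrightarrow> v \<in> WD \<Longrightarrow> u \<circ> v \<in> WD"
  unfolding WD_def by (auto simp: rw_append[symmetric]) (metis Un_subset_iff set_append)

lemma WD_simple: "\<alpha> \<in> \<Delta> \<Longrightarrow> refl \<alpha> \<in> WD"
  unfolding WD_def by (rule CollectI, rule exI[of _ "[\<alpha>]"]) auto

lemma ht_scale: "ht (c *\<^sub>R v) = c * ht v" unfolding ht_def coef_scale by (simp add: sum_distrib_left)

lemma refl_pos_WD: "\<beta> \<in> pos \<Longrightarrow> refl \<beta> \<in> WD"
proof (induction \<beta> rule: pos_induct)
  case (step \<beta>)
  show ?case
  proof (cases "\<beta> \<in> \<Delta>")
    case True then show ?thesis by (rule WD_simple)
  next
    case False
    obtain \<alpha> where a: "\<alpha> \<in> \<Delta>" "\<beta> \<bullet> \<alpha> > 0" using exists_pos_inner[OF step(1)] by blast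
    have ne: "\<beta> \<noteq> \<alpha>" using a False by auto
    define \<beta>' where "\<beta>' = refl \<alpha> \<beta>"
    have p': "\<beta>' \<in> pos" unfolding \<beta>'_def by (rule simple_refl_pos[OF step(1) a(1) ne])
    have an: "\<alpha> \<bullet> \<alpha> > 0" using a D_sub root_nz by auto
    have "ht \<beta>' = ht \<beta> - 2 * (\<beta> \<bullet> \<alpha>) / (\<alpha> \<bullet> \<alpha>)"
      unfolding \<beta>'_def refl_def using a by (simp add: ht_diff ht_scale ht_simple)
    moreover have "2 * (\<beta> \<bullet> \<alpha>) / (\<alpha> \<bullet> \<alpha>) > 0" using a an by simp
    ultimately have "ht \<beta>' < ht \<beta>" by simp
    hence IH: "refl \<beta>' \<in> WD" using step(2) p' by blast
    have anz: "\<alpha> \<noteq> 0" using an by auto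
    have rw: "refl \<alpha> \<in> WG" using WD_sub WD_simple a by auto
    have bb: "\<beta> = refl \<alpha> \<beta>'" unfolding \<beta>'_def by (simp add: refl_invol[OF anz])
    have "refl \<beta> \<circ> refl \<alpha> = refl \<alpha> \<circ> refl \<beta>'"
      unfolding bb by (rule conj_refl[OF rw]) (use p' pos_sub root_nz in auto)
    hence "refl \<beta> = refl \<alpha> \<circ> refl \<beta>' \<circ> refl \<alpha>"
      using refl_invol[OF anz] by (auto simp: fun_eq_iff) (metis)
    thus ?thesis using WD_comp[OF WD_comp[OF WD_simple[OF a(1)] IH] WD_simple[OF a(1)]] by metis
  qed
qed

lemma refl_WD: "\<beta> \<in> \<Phi> \<Longrightarrow> refl \<beta> \<in> WD"
  using root_pos_or_neg[of \<beta>] refl_pos_WD refl_uminus neg_def by metis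

lemma WG_eq: "WG = WD"
proof
  show "WD \<subseteq> WG" by (rule WD_sub)
  show "WG \<subseteq> WD"
  proof
    fix w assume "w \<in> WG"
    then obtain ws where ws: "set ws \<subseteq> \<Phi>" "w = refl_word ws" by (auto simp: WG_iff)
    have "refl_word ws \<in> WD" using ws(1)
    proof (induction ws)
      case Nil then show ?case unfolding WD_def by (auto intro!: exI[of _ "[]"])
    next
      case (Cons a ws)
      have "refl a \<in> WD" using Cons.prems refl_WD by auto
      moreover have "refl_word ws \<in> WD" using Cons by auto
      ultimately show ?case using WD_comp by (metis rw_Cons)
    qed
    thus "w \<in> WD" using ws by simp
  qed
qed

end

context RS begin

abbreviation Ninv where "Ninv w \<equiv> inv_set \<Phi> \<Delta> w"

lemma Ninv_iff: "\<beta> \<in> Ninv w \<longleftrightarrow> \<beta> \<in> pos \<and> neg (w \<beta>)"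
  unfolding inv_set_def neg_def by (auto simp: image_iff) (metis minus_minus)

lemma Ninv_fin: "finite (Ninv w)"
  using finite_pos by (rule finite_subset[rotated]) (auto simp: Ninv_iff)

lemma Ninv_id: "Ninv id = {}" using pos_not_neg by (auto simp: Ninv_iff)

lemma WG_pos_or_neg: "w \<in> WG \<Longrightarrow> \<beta> \<in> \<Phi> \<Longrightarrow> w \<beta> \<in> pos \<or> neg (w \<beta>)"
  using root_pos_or_neg WG_Phi by blast

lemma neg_simple: "\<alpha> \<in> \<Delta> \<Longrightarrow> neg (- \<alpha>)" using D_pos by (simp add: neg_def)

lemma inv_step_pos:
  assumes w: "w \<in> WG" and a: "\<alpha> \<in> \<Delta>" and p: "w \<alpha> \<in> pos"
  shows "card (Ninv (w \<circ> refl \<alpha>)) = card (Ninv w) + 1"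
proof -
  have anz: "\<alpha> \<noteq> 0" using a D_sub root_nz by auto
  have l: "linear w" using WG_linear[OF w] .
  have eq: "Ninv (w \<circ> refl \<alpha>) = insert \<alpha> (refl \<alpha> ` Ninv w)"
  proof
    show "Ninv (w \<circ> refl \<alpha>) \<subseteq> insert \<alpha> (refl \<alpha> ` Ninv w)"
    proof
      fix \<beta> assume b: "\<beta> \<in> Ninv (w \<circ> refl \<alpha>)"
      show "\<beta> \<in> insert \<alpha> (refl \<alpha> ` Ninv w)"
      proof (cases "\<beta> = \<alpha>")
        case False
        have "refl \<alpha> \<beta> \<in> pos" using simple_refl_pos[OF _ a False] b by (auto simp: Ninv_iff)
        hence "refl \<alpha> \<beta> \<in> Ninv w" using b by (auto simp: Ninv_iff)
        moreover have "\<beta> = refl \<alpha> (refl \<alpha> \<beta>)" by (simp add: refl_invol[OF anz])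
        ultimately show ?thesis by blast
      qed simp
    qed
    show "insert \<alpha> (refl \<alpha> ` Ninv w) \<subseteq> Ninv (w \<circ> refl \<alpha>)"
    proof
      fix \<beta> assume b: "\<beta> \<in> insert \<alpha> (refl \<alpha> ` Ninv w)"
      show "\<beta> \<in> Ninv (w \<circ> refl \<alpha>)"
      proof (cases "\<beta> = \<alpha>")
        case True
        have "w (refl \<alpha> \<alpha>) = - w \<alpha>" using refl_self[OF anz] linear_neg[OF l] by simp
        thus ?thesis using True p D_pos[OF a] by (simp add: Ninv_iff neg_def)
      next
        case False
        then obtain \<gamma> where g: "\<gamma> \<in> Ninv w" "\<beta> = refl \<alpha> \<gamma>" using b by auto
        have "\<gamma> \<noteq> \<alpha>" using g p pos_not_neg by (auto simp: Ninv_iff)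
        hence "\<beta> \<in> pos" using simple_refl_pos[OF _ a] g by (auto simp: Ninv_iff)
        moreover have "w (refl \<alpha> \<beta>) = w \<gamma>" using g by (simp add: refl_invol[OF anz])
        ultimately show ?thesis using g by (simp add: Ninv_iff)
      qed
    qed
  qed
  have nin: "\<alpha> \<notin> refl \<alpha> ` Ninv w"
  proof
    assume "\<alpha> \<in> refl \<alpha> ` Ninv w"
    then obtain \<gamma> where g: "\<gamma> \<in> Ninv w" "\<alpha> = refl \<alpha> \<gamma>" by auto
    hence "\<gamma> = refl \<alpha> \<alpha>" by (metis refl_invol[OF anz])
    hence "\<gamma> = - \<alpha>" using refl_self[OF anz] by simp
    with g(1) neg_simple[OF a] pos_not_neg show False by (auto simp: Ninv_iff)
  qed
  have "inj_on (refl \<alpha>) (Ninv w)" by (metis inj_onI refl_invol[OF anz])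
  hence "card (refl \<alpha> ` Ninv w) = card (Ninv w)" by (rule card_image)
  thus ?thesis unfolding eq using nin Ninv_fin by simp
qed

lemma inv_step_neg:
  assumes w: "w \<in> WG" and a: "\<alpha> \<in> \<Delta>" and n: "neg (w \<alpha>)"
  shows "card (Ninv w) = card (Ninv (w \<circ> refl \<alpha>)) + 1"
proof -
  have anz: "\<alpha> \<noteq> 0" using a D_sub root_nz by auto
  have w': "w \<circ> refl \<alpha> \<in> WG" using WG_refl_right a D_sub w by auto
  have "(w \<circ> refl \<alpha>) \<alpha> = - w \<alpha>" using refl_self[OF anz] linear_neg[OF WG_linear[OF w]] by simp
  hence p: "(w \<circ> refl \<alpha>) \<alpha> \<in> pos" using n by (simp add: neg_def)
  have "w \<circ> refl \<alpha> \<circ> refl \<alpha> = w" by (auto simp: fun_eq_iff refl_invol[OF anz])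
  with inv_step_pos[OF w' a p] show ?thesis by (simp only:)
qed

lemma card_inv_le: "set ws \<subseteq> \<Delta> \<Longrightarrow> card (Ninv (refl_word ws)) \<le> length ws"
proof (induction ws rule: rev_induct)
  case Nil then show ?case by (simp only: rw_Nil Ninv_id) simp
next
  case (snoc \<alpha> vs)
  have a: "\<alpha> \<in> \<Delta>" and vs: "set vs \<subseteq> \<Delta>" using snoc.prems by auto
  have u: "refl_word vs \<in> WG" using vs D_sub unfolding WG_iff by auto
  have e: "refl_word (vs @ [\<alpha>]) = refl_word vs \<circ> refl \<alpha>" by (simp add: rw_append)
  from WG_pos_or_neg[OF u, of \<alpha>] a D_sub have "refl_word vs \<alpha> \<in> pos \<or> neg (refl_word vs \<alpha>)" by auto
  thus ?case
  proof
    assume p: "refl_word vs \<alpha> \<in> pos"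
    show ?thesis unfolding e using inv_step_pos[OF u a p] snoc.IH[OF vs] unfolding length_append_singleton by linarith
  next
    assume n: "neg (refl_word vs \<alpha>)"
    show ?thesis unfolding e using inv_step_neg[OF u a n] snoc.IH[OF vs] unfolding length_append_singleton by linarith
  qed
qed

lemma exchange:
  "set vs \<subseteq> \<Delta> \<Longrightarrow> \<alpha> \<in> \<Delta> \<Longrightarrow> neg (refl_word vs \<alpha>) \<Longrightarrow>
    \<exists>vs'. set vs' \<subseteq> \<Delta> \<and> length vs' + 1 = length vs \<and> refl_word vs = refl_word vs' \<circ> refl \<alpha>"
proof (induction vs)
  case Nil
  then show ?case using D_pos pos_not_neg by auto
next
  case (Cons a rest)
  have aD: "a \<in> \<Delta>" and rD: "set rest \<subseteq> \<Delta>" using Cons.prems by auto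
  have r: "refl_word rest \<in> WG" using rD D_sub unfolding WG_iff by auto
  from WG_pos_or_neg[OF r, of \<alpha>] Cons.prems D_sub
  have "refl_word rest \<alpha> \<in> pos \<or> neg (refl_word rest \<alpha>)" by auto
  thus ?case
  proof
    assume "neg (refl_word rest \<alpha>)"
    from Cons.IH[OF rD Cons.prems(2) this] obtain vs' where
      v: "set vs' \<subseteq> \<Delta>" "length vs' + 1 = length rest" "refl_word rest = refl_word vs' \<circ> refl \<alpha>" by blast
    show ?thesis
      by (rule exI[of _ "a # vs'"]) (use v aD in \<open>auto simp: o_assoc\<close>)
  next
    assume pr: "refl_word rest \<alpha> \<in> pos"
    have "refl_word rest \<alpha> = a"
    proof (rule ccontr)
      assume "refl_word rest \<alpha> \<noteq> a"
      hence "refl a (refl_word rest \<alpha>) \<in> pos" using simple_refl_pos[OF pr aD] by blast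
      with Cons.prems(3) pos_not_neg show False by simp
    qed
    hence "refl a \<circ> refl_word rest = refl_word rest \<circ> refl \<alpha>"
      using conj_refl[OF r, of \<alpha>] Cons.prems(2) D_sub root_nz by auto
    thus ?thesis using rD by (intro exI[of _ rest]) auto
  qed
qed

lemma deletion:
  "set ws \<subseteq> \<Delta> \<Longrightarrow> card (Ninv (refl_word ws)) < length ws \<Longrightarrow>
    \<exists>ws'. set ws' \<subseteq> \<Delta> \<and> refl_word ws' = refl_word ws \<and> length ws' < length ws"
proof (induction ws rule: rev_induct)
  case Nil then show ?case by simp
next
  case (snoc \<alpha> vs)
  have a: "\<alpha> \<in> \<Delta>" and vs: "set vs \<subseteq> \<Delta>" using snoc.prems by auto
  have anz: "\<alpha> \<noteq> 0" using a D_sub root_nz by auto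
  have u: "refl_word vs \<in> WG" using vs D_sub unfolding WG_iff by auto
  have e: "refl_word (vs @ [\<alpha>]) = refl_word vs \<circ> refl \<alpha>" by (simp add: rw_append)
  show ?case
  proof (cases "card (Ninv (refl_word vs)) < length vs")
    case True
    from snoc.IH[OF vs True] obtain vs' where v: "set vs' \<subseteq> \<Delta>" "refl_word vs' = refl_word vs" "length vs' < length vs"
      by blast
    show ?thesis by (rule exI[of _ "vs' @ [\<alpha>]"]) (use v a in \<open>auto simp: rw_append\<close>)
  next
    case False
    hence ceq: "card (Ninv (refl_word vs)) = length vs" using card_inv_le[OF vs] by simp
    from WG_pos_or_neg[OF u, of \<alpha>] a D_sub have "refl_word vs \<alpha> \<in> pos \<or> neg (refl_word vs \<alpha>)" by auto
    thus ?thesis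
    proof
      assume p: "refl_word vs \<alpha> \<in> pos"
      have "card (Ninv (refl_word (vs @ [\<alpha>]))) = length vs + 1"
        unfolding e by (simp only: inv_step_pos[OF u a p] ceq)
      with snoc.prems(2) show ?thesis by simp
    next
      assume "neg (refl_word vs \<alpha>)"
      from exchange[OF vs a this] obtain vs' where
        v: "set vs' \<subseteq> \<Delta>" "length vs' + 1 = length vs" "refl_word vs = refl_word vs' \<circ> refl \<alpha>" by blast
      have "refl_word (vs @ [\<alpha>]) = refl_word vs'"
        using e v(3) by (auto simp: fun_eq_iff refl_invol[OF anz])
      thus ?thesis using v by (intro exI[of _ vs']) auto
    qed
  qed
qed

lemma length_eq:
  assumes w: "w \<in> WD"
  shows "weyl_length \<Delta> w = card (Ninv w)"
proof -
  let ?P = "\<lambda>k. \<exists>ws. set ws \<subseteq> \<Delta> \<and> length ws = k \<and> refl_word ws = w"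
  obtain ws where ws: "set ws \<subseteq> \<Delta>" "refl_word ws = w" using w unfolding WD_def by auto
  hence "?P (length ws)" by blast
  hence "?P (weyl_length \<Delta> w)" unfolding weyl_length_def by (rule LeastI)
  then obtain ws0 where ws0: "set ws0 \<subseteq> \<Delta>" "length ws0 = weyl_length \<Delta> w" "refl_word ws0 = w" by blast
  have le: "card (Ninv w) \<le> length ws0" using card_inv_le[OF ws0(1)] ws0(3) by simp
  have "\<not> card (Ninv w) < length ws0"
  proof
    assume "card (Ninv w) < length ws0"
    from deletion[OF ws0(1)] this ws0(3) obtain ws' where
      v: "set ws' \<subseteq> \<Delta>" "refl_word ws' = w" "length ws' < length ws0" by auto
    hence "?P (length ws')" by blast
    hence "weyl_length \<Delta> w \<le> length ws'" unfolding weyl_length_def by (rule Least_le)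
    with v ws0 show False by simp
  qed
  with le ws0 show ?thesis by simp
qed

lemma descent_iff:
  assumes w: "w \<in> WG" and a: "\<alpha> \<in> \<Delta>"
  shows "\<alpha> \<in> right_descents \<Delta> w \<longleftrightarrow> neg (w \<alpha>)"
proof -
  have w': "w \<circ> refl \<alpha> \<in> WG" using WG_refl_right a D_sub w by auto
  have l1: "weyl_length \<Delta> w = card (Ninv w)" using length_eq w WG_eq by auto
  have l2: "weyl_length \<Delta> (w \<circ> refl \<alpha>) = card (Ninv (w \<circ> refl \<alpha>))" using length_eq w' WG_eq by auto
  from WG_pos_or_neg[OF w, of \<alpha>] a D_sub have "w \<alpha> \<in> pos \<or> neg (w \<alpha>)" by auto
  thus ?thesis
  proof
    assume p: "w \<alpha> \<in> pos"
    from inv_step_pos[OF w a p] l1 l2 p pos_not_neg show ?thesis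
      unfolding right_descents_def using a by auto
  next
    assume n: "neg (w \<alpha>)"
    from inv_step_neg[OF w a n] l1 l2 n show ?thesis
      unfolding right_descents_def using a by auto
  qed
qed

end

context RS begin

context
  fixes \<alpha>i
  assumes irr: "irreducible_root_system \<Phi>" and ai: "\<alpha>i \<in> \<Delta>"
    and m1: "coef (highest_root \<Phi> \<Delta>) \<alpha>i = 1"
begin

abbreviation M where "M \<equiv> M_set \<Phi> \<Delta> \<alpha>i"

lemma coef_le1: "\<beta> \<in> pos \<Longrightarrow> coef \<beta> \<alpha>i \<le> 1"
  using coef_le_highest[OF irr _ ai] m1 by simp

lemma M_iff: "\<beta> \<in> M \<longleftrightarrow> \<beta> \<in> pos \<and> coef \<beta> \<alpha>i = 1"
proof
  assume b: "\<beta> \<in> M"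
  hence p: "\<beta> \<in> pos" and r: "root_le \<Delta> \<alpha>i \<beta>" unfolding M_set_def by auto
  have "coef \<alpha>i \<alpha>i \<le> coef \<beta> \<alpha>i" using r root_le_iff p pos_sub ai D_sub by auto
  hence "1 \<le> coef \<beta> \<alpha>i" using ai by (simp add: coef_basis)
  with coef_le1[OF p] p show "\<beta> \<in> pos \<and> coef \<beta> \<alpha>i = 1" by simp
next
  assume b: "\<beta> \<in> pos \<and> coef \<beta> \<alpha>i = 1"
  have "\<forall>a\<in>\<Delta>. coef \<alpha>i a \<le> coef \<beta> a" using b ai by (auto simp: coef_basis pos_iff)
  hence "root_le \<Delta> \<alpha>i \<beta>" using root_le_iff b pos_sub ai D_sub by auto
  with b show "\<beta> \<in> M" unfolding M_set_def by auto
qed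

lemma M_abelian: "\<beta> \<in> M \<Longrightarrow> \<gamma> \<in> M \<Longrightarrow> \<beta> + \<gamma> \<notin> \<Phi>"
proof
  assume b: "\<beta> \<in> M" and g: "\<gamma> \<in> M" and r: "\<beta> + \<gamma> \<in> \<Phi>"
  have "\<beta> + \<gamma> \<in> pos" using b g r by (auto simp: M_iff pos_iff coef_add)
  hence "coef (\<beta> + \<gamma>) \<alpha>i \<le> 1" by (rule coef_le1)
  with b g show False by (simp add: M_iff coef_add)
qed

definition LS where "LS N \<longleftrightarrow> (\<forall>\<beta>\<in>N. \<forall>x\<in>M. root_le \<Delta> x \<beta> \<longrightarrow> x \<in> N)"

lemma nn_sum_neg:
  assumes "\<forall>b\<in>\<Delta>. coef v b \<ge> 0" and "neg v" shows False
proof -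
  have "\<forall>b\<in>\<Delta>. coef v b = 0" using assms neg_iff by force
  hence "v = 0" by (rule coef_eq0)
  with assms(2) neg_iff root_nz show False by blast
qed

lemma back_dir:
  assumes w: "w \<in> WG" and d: "right_descents \<Delta> w \<subseteq> {\<alpha>i}"
  shows "abelian_ideal \<Phi> \<Delta> (M - Ninv w)"
proof -
  have l: "linear w" using WG_linear[OF w] .
  have wpos: "\<And>a. a \<in> \<Delta> \<Longrightarrow> a \<noteq> \<alpha>i \<Longrightarrow> w a \<in> pos"
  proof -
    fix a assume a: "a \<in> \<Delta>" "a \<noteq> \<alpha>i"
    hence "\<not> neg (w a)" using descent_iff[OF w a(1)] d by auto
    thus "w a \<in> pos" using WG_pos_or_neg[OF w] a D_sub by auto
  qed
  have up: "\<gamma> \<in> M - Ninv w" if b: "\<beta> \<in> M - Ninv w" and g: "\<gamma> \<in> pos" and r: "root_le \<Delta> \<beta> \<gamma>" for \<beta> \<gamma>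
  proof -
    have bp: "\<beta> \<in> pos" "coef \<beta> \<alpha>i = 1" using b M_iff by auto
    have le: "\<forall>a\<in>\<Delta>. coef \<beta> a \<le> coef \<gamma> a" using r root_le_iff bp g pos_sub by auto
    have gM: "\<gamma> \<in> M" using le ai bp coef_le1[OF g] g M_iff by force
    have wb: "w \<beta> \<in> pos" using b bp WG_pos_or_neg[OF w, of \<beta>] pos_sub by (auto simp: Ninv_iff)
    define d where "d = \<gamma> - \<beta>"
    have cd: "\<And>a. a \<in> \<Delta> \<Longrightarrow> coef d a \<ge> 0" using le by (simp add: d_def coef_diff)
    have cdi: "coef d \<alpha>i = 0" using gM bp by (simp add: d_def coef_diff M_iff)
    have "w d = w (\<Sum>a\<in>\<Delta>. coef d a *\<^sub>R a)" by (subst coef_expand) simp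
    also have "\<dots> = (\<Sum>a\<in>\<Delta>. coef d a *\<^sub>R w a)" by (simp add: linear_sum[OF l] linear_scale[OF l])
    finally have wd: "w d = (\<Sum>a\<in>\<Delta>. coef d a *\<^sub>R w a)" .
    have nnd: "\<forall>b\<in>\<Delta>. coef (w d) b \<ge> 0"
    proof
      fix b assume bD: "b \<in> \<Delta>"
      have "coef (w d) b = (\<Sum>a\<in>\<Delta>. coef d a * coef (w a) b)" unfolding wd coef_sum coef_scale ..
      also have "\<dots> \<ge> 0"
      proof (rule sum_nonneg)
        fix a assume aD: "a \<in> \<Delta>"
        show "0 \<le> coef d a * coef (w a) b"
        proof (cases "a = \<alpha>i")
          case True then show ?thesis using cdi by simp
        next
          case False
          hence "coef (w a) b \<ge> 0" using wpos[OF aD False] bD pos_iff by auto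
          thus ?thesis using cd[OF aD] by simp
        qed
      qed
      finally show "coef (w d) b \<ge> 0" .
    qed
    have "w \<gamma> = w \<beta> + w d" unfolding d_def by (simp add: linear_diff[OF l])
    hence nng: "\<forall>b\<in>\<Delta>. coef (w \<gamma>) b \<ge> 0" using nnd wb by (auto simp: coef_add pos_iff)
    hence "\<not> neg (w \<gamma>)" using nn_sum_neg by blast
    thus ?thesis using gM by (auto simp: Ninv_iff)
  qed
  show ?thesis unfolding abelian_ideal_def
  proof (intro conjI ballI impI)
    show "M - Ninv w \<subseteq> pos" using M_iff by auto
  next
    fix \<beta> \<gamma> assume "\<beta> \<in> M - Ninv w" "\<gamma> \<in> pos" "root_le \<Delta> \<beta> \<gamma>"
    thus "\<gamma> \<in> M - Ninv w" by (rule up)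
  next
    fix \<beta> \<gamma> assume "\<beta> \<in> M - Ninv w" "\<gamma> \<in> M - Ninv w"
    thus "\<beta> + \<gamma> \<notin> \<Phi>" using M_abelian by blast
  qed
qed

lemma constr:
  "finite N \<Longrightarrow> N \<subseteq> M \<Longrightarrow> LS N \<Longrightarrow> \<exists>w\<in>WD. Ninv w = N"
proof (induction "card N" arbitrary: N rule: less_induct)
  case less
  show ?case
  proof (cases "N = {}")
    case True
    have "id \<in> WD" unfolding WD_def by (auto intro!: exI[of _ "[]"])
    thus ?thesis using True Ninv_id by blast
  next
    case False
    obtain \<beta> where b: "\<beta> \<in> N" "\<forall>y\<in>N. ht y \<le> ht \<beta>" using finite_argmax[OF less.prems(1) False, of ht] by blast
    have bM: "\<beta> \<in> M" using b less.prems by auto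
    hence bp: "\<beta> \<in> pos" "coef \<beta> \<alpha>i = 1" using M_iff by auto
    define N' where "N' = N - {\<beta>}"
    have cN': "card N' < card N" unfolding N'_def by (rule card_Diff1_less[OF less.prems(1) b(1)])
    have LS': "LS N'" unfolding LS_def
    proof (intro ballI impI)
      fix b' x assume b': "b' \<in> N'" and x: "x \<in> M" and r: "root_le \<Delta> x b'"
      have xN: "x \<in> N" using less.prems(3) b' x r unfolding LS_def N'_def by auto
      have "x \<noteq> \<beta>"
      proof
        assume xb: "x = \<beta>"
        have b'p: "b' \<in> pos" using b' less.prems(2) M_iff unfolding N'_def by auto
        have le: "\<forall>a\<in>\<Delta>. coef \<beta> a \<le> coef b' a" using r xb root_le_iff b'p bp pos_sub by auto
        have ne: "b' \<noteq> \<beta>" using b' N'_def by auto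
        obtain a where a: "a \<in> \<Delta>" "coef (b' - \<beta>) a \<noteq> 0"
          using coef_eq0[of "b' - \<beta>"] ne by auto
        have "ht (b' - \<beta>) > 0" unfolding ht_def
          using a le by (intro sum_pos2[OF finD a(1)]) (auto simp: coef_diff)
        hence "ht b' > ht \<beta>" by (simp add: ht_diff)
        moreover have "ht b' \<le> ht \<beta>" using b b' N'_def by auto
        ultimately show False by simp
      qed
      thus "x \<in> N'" using xN N'_def by auto
    qed
    have "N' \<subseteq> M" using less.prems N'_def by auto
    from less.hyps[OF cN' _ this LS'] less.prems(1) obtain w' where
      w': "w' \<in> WD" "Ninv w' = N'" unfolding N'_def by auto
    have w'G: "w' \<in> WG" using w' WG_eq by auto
    have l: "linear w'" using WG_linear[OF w'G] .
    have inj: "inj w'" using WG_inj[OF w'G] .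
    have "\<beta> \<notin> N'" using N'_def by auto
    hence rp: "w' \<beta> \<in> pos" using WG_pos_or_neg[OF w'G, of \<beta>] bp pos_sub w' by (auto simp: Ninv_iff)
    have N'M: "\<And>x. x \<in> N' \<Longrightarrow> x \<in> pos \<and> coef x \<alpha>i = 1" using less.prems N'_def M_iff by auto
    have negcase: False if ab: "a \<in> \<Phi>" "b \<in> \<Phi>" "a + b = \<beta>" "neg a" "neg (w' (- a))" for a b
    proof -
      have "-a \<in> Ninv w'" using ab by (simp add: Ninv_iff neg_def)
      hence ma: "coef (-a) \<alpha>i = 1" using N'M w' by auto
      have "b = \<beta> + (-a)" using ab by (simp add: algebra_simps)
      hence "coef b \<alpha>i = 2" using ma bp by (simp only: coef_add)
      moreover from root_pos_or_neg[OF ab(2)] have "coef b \<alpha>i \<le> 1"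
        using coef_le1 neg_iff ai by force
      ultimately show False by simp
    qed
    have poscase: False if ab: "a \<in> pos" "b \<in> pos" "a + b = \<beta>" "coef a \<alpha>i \<ge> 1"
      "w' a \<in> pos" for a b
    proof -
      have "coef a \<alpha>i = 1" using coef_le1[OF ab(1)] ab by simp
      hence aM: "a \<in> M" using ab M_iff by auto
      have ce: "coef \<beta> c = coef a c + coef b c" for c using ab(3) coef_add by metis
      have "\<forall>c\<in>\<Delta>. coef a c \<le> coef \<beta> c" using ab(2) ce by (auto simp: pos_iff)
      hence "root_le \<Delta> a \<beta>"
        using ab bp pos_sub root_le_iff by blast
      hence aN: "a \<in> N" using less.prems(3) b aM unfolding LS_def by auto
      have "a \<noteq> \<beta>" using ab pos_sub root_nz by force
      hence "a \<in> Ninv w'" using aN w' N'_def by auto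
      with ab pos_not_neg show False by (auto simp: Ninv_iff)
    qed
    have simple: "w' \<beta> \<in> \<Delta>"
    proof (rule ccontr)
      assume nd: "w' \<beta> \<notin> \<Delta>"
      obtain \<alpha> where a: "\<alpha> \<in> \<Delta>" "w' \<beta> - \<alpha> \<in> pos" using pos_sub_simple[OF rp nd] by blast
      obtain x where x: "x \<in> \<Phi>" "w' x = \<alpha>" using WG_surj[OF w'G, of \<alpha>] a D_sub by auto
      obtain y where y: "y \<in> \<Phi>" "w' y = w' \<beta> - \<alpha>" using WG_surj[OF w'G, of "w' \<beta> - \<alpha>"] a pos_sub by auto
      have "w' (x + y) = w' \<beta>" using x y linear_add[OF l] by simp
      hence xy: "x + y = \<beta>" using inj by (simp add: inj_def)
      have yx: "y + x = \<beta>" using xy by (simp add: add.commute)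
      have wmx: "w' (- x) = - \<alpha>" using x linear_neg[OF l] by simp
      have wmy: "w' (- y) = - (w' \<beta> - \<alpha>)" using y linear_neg[OF l] by simp
      show False
      proof (cases "neg x")
        case True
        thus False using negcase[OF x(1) y(1) xy True] wmx neg_simple[OF a(1)] by simp
      next
        case nx: False
        hence xp: "x \<in> pos" using root_pos_or_neg[OF x(1)] by auto
        show False
        proof (cases "neg y")
          case True
          thus False using negcase[OF y(1) x(1) yx True] wmy a(2) by (simp add: neg_def)
        next
          case False
          hence yp: "y \<in> pos" using root_pos_or_neg[OF y(1)] by auto
          have ci: "coef x \<alpha>i + coef y \<alpha>i = 1" using xy bp by (metis coef_add)
          have "coef x \<alpha>i \<in> \<int>" using coef_int x by auto
          then obtain k where k: "coef x \<alpha>i = of_int k" using Ints_cases by blast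
          have "coef x \<alpha>i \<ge> 0" "coef y \<alpha>i \<ge> 0" using xp yp ai pos_iff by auto
          show False
          proof (cases "coef x \<alpha>i \<ge> 1")
            case True
            thus False using poscase[OF xp yp xy True] x a D_pos by auto
          next
            case False
            hence "k < 1" "k \<ge> 0" using k \<open>coef x \<alpha>i \<ge> 0\<close> by auto
            hence "coef x \<alpha>i = 0" using k by simp
            hence "coef y \<alpha>i \<ge> 1" using ci by simp
            thus False using poscase[OF yp xp yx] y a by auto
          qed
        qed
      qed
    qed
    define \<alpha>0 where "\<alpha>0 = w' \<beta>"
    have a0: "\<alpha>0 \<in> \<Delta>" using simple \<alpha>0_def by simp
    have a0nz: "\<alpha>0 \<noteq> 0" using a0 D_sub root_nz by auto
    define w where "w = refl \<alpha>0 \<circ> w'"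
    have wD: "w \<in> WD" unfolding w_def by (rule WD_comp[OF WD_simple[OF a0] w'(1)])
    have "Ninv w = N"
    proof (intro set_eqI iffI)
      fix \<gamma> assume g: "\<gamma> \<in> Ninv w"
      hence gp: "\<gamma> \<in> pos" and ng: "neg (refl \<alpha>0 (w' \<gamma>))" by (auto simp: Ninv_iff w_def)
      show "\<gamma> \<in> N"
      proof (cases "\<gamma> = \<beta>")
        case True then show ?thesis using b by simp
      next
        case False
        hence ne: "w' \<gamma> \<noteq> \<alpha>0" using inj \<alpha>0_def by (auto simp: inj_def)
        have "\<not> w' \<gamma> \<in> pos"
        proof
          assume "w' \<gamma> \<in> pos"
          hence "refl \<alpha>0 (w' \<gamma>) \<in> pos" using simple_refl_pos[OF _ a0 ne] by blast
          with ng pos_not_neg show False by blast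
        qed
        hence "neg (w' \<gamma>)" using WG_pos_or_neg[OF w'G, of \<gamma>] gp pos_sub by auto
        hence "\<gamma> \<in> N'" using w' gp by (auto simp: Ninv_iff)
        thus ?thesis using N'_def by auto
      qed
    next
      fix \<gamma> assume g: "\<gamma> \<in> N"
      hence gp: "\<gamma> \<in> pos" using less.prems M_iff by auto
      show "\<gamma> \<in> Ninv w"
      proof (cases "\<gamma> = \<beta>")
        case True
        have "refl \<alpha>0 (w' \<gamma>) = - \<alpha>0" using True \<alpha>0_def refl_self[OF a0nz] by simp
        thus ?thesis using gp neg_simple[OF a0] by (simp add: Ninv_iff w_def)
      next
        case False
        hence "\<gamma> \<in> Ninv w'" using g w' N'_def by auto
        hence n: "neg (w' \<gamma>)" by (simp add: Ninv_iff)
        have ne: "- w' \<gamma> \<noteq> \<alpha>0"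
        proof
          assume "- w' \<gamma> = \<alpha>0"
          hence "w' (- \<gamma>) = w' \<beta>" using \<alpha>0_def linear_neg[OF l] by simp
          hence "- \<gamma> = \<beta>" using inj by (simp add: inj_def)
          hence "neg \<beta>" using gp unfolding neg_def by (metis minus_minus)
          with bp pos_not_neg show False by blast
        qed
        have "refl \<alpha>0 (- w' \<gamma>) \<in> pos" using simple_refl_pos[OF _ a0 ne] n by (simp add: neg_def)
        hence "neg (refl \<alpha>0 (w' \<gamma>))" by (simp add: neg_def refl_minus)
        thus ?thesis using gp by (simp add: Ninv_iff w_def)
      qed
    qed
    with wD show ?thesis by blast
  qed
qed

lemma main:
  assumes NM: "N \<subseteq> M"
  shows "abelian_ideal \<Phi> \<Delta> (M - N) \<longleftrightarrow> (\<exists>w \<in> min_coset_reps \<Phi> \<Delta> \<alpha>i. N = Ninv w)"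
proof
  assume ai_: "abelian_ideal \<Phi> \<Delta> (M - N)"
  have LS: "LS N" unfolding LS_def
  proof (intro ballI impI)
    fix \<beta> x assume b: "\<beta> \<in> N" and x: "x \<in> M" and r: "root_le \<Delta> x \<beta>"
    show "x \<in> N"
    proof (rule ccontr)
      assume "x \<notin> N"
      hence "x \<in> M - N" using x by auto
      moreover have "\<beta> \<in> pos" using b NM M_iff by auto
      ultimately have "\<beta> \<in> M - N" using ai_ r unfolding abelian_ideal_def by blast
      with b show False by auto
    qed
  qed
  have fin: "finite N" using NM finite_pos M_iff by (auto intro: finite_subset)
  obtain w where w: "w \<in> WD" "Ninv w = N" using constr[OF fin NM LS] by blast
  have wG: "w \<in> weyl_group \<Phi>" using w WG_eq WG_def by auto
  have "right_descents \<Delta> w \<subseteq> {\<alpha>i}"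
  proof
    fix a assume a: "a \<in> right_descents \<Delta> w"
    hence aD: "a \<in> \<Delta>" unfolding right_descents_def by auto
    hence "neg (w a)" using descent_iff[of w a] a w WG_eq by auto
    hence "a \<in> N" using w aD D_pos by (auto simp: Ninv_iff)
    hence "coef a \<alpha>i = 1" using NM M_iff by auto
    thus "a \<in> {\<alpha>i}" using aD by (auto simp: coef_basis split: if_splits)
  qed
  thus "\<exists>w \<in> min_coset_reps \<Phi> \<Delta> \<alpha>i. N = Ninv w" using wG w unfolding min_coset_reps_def by auto
next
  assume "\<exists>w \<in> min_coset_reps \<Phi> \<Delta> \<alpha>i. N = Ninv w"
  then obtain w where w: "w \<in> weyl_group \<Phi>" "right_descents \<Delta> w \<subseteq> {\<alpha>i}" "N = Ninv w"
    unfolding min_coset_reps_def by auto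
  show "abelian_ideal \<Phi> \<Delta> (M - N)" using back_dir[of w] w WG_def by auto
qed

end
end


theorem proposition5p4:
  fixes \<Phi> \<Delta> N :: "'a::euclidean_space set" and \<alpha>i :: 'a
  assumes "irreducible_root_system \<Phi>"
    and "root_basis \<Phi> \<Delta>"
    and "\<alpha>i \<in> \<Delta>"
    and "root_coeff \<Delta> (highest_root \<Phi> \<Delta>) \<alpha>i = 1"
    and "N \<subseteq> M_set \<Phi> \<Delta> \<alpha>i"
  shows "abelian_ideal \<Phi> \<Delta> (M_set \<Phi> \<Delta> \<alpha>i - N) \<longleftrightarrow>
         (\<exists>w \<in> min_coset_reps \<Phi> \<Delta> \<alpha>i. N = inv_set \<Phi> \<Delta> w)"
proof -
  interpret RS \<Phi> \<Delta>
    using assms(1,2) unfolding irreducible_root_system_def by unfold_locales auto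
  have m1: "coef (highest_root \<Phi> \<Delta>) \<alpha>i = 1" using assms(4) unfolding coef_def root_coeff_def .
  show ?thesis using main[OF assms(1) assms(3) m1 assms(5)] .
qed

end
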